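(* Suppose each local cost $f_i$ is $L_i$-smooth for some $L_i>0$, the aggregate cost is $f(x)=g(Hx)$ for an $\alpha$-strongly convex ($\alpha>0$), $\mathbf{L}$-smooth $g:\mathbb{R}^m\to\mathbb{R}$ and $H\in\mathbb{R}^{m\times p}$, $f$ has a minimizer, and $D:=\sup_{x\in X^*}(\sum_{j=1}^n\|\nabla f_j(x)\|^2)^{1/2}<\infty$. Let $L=\max_iL_i$ and $C_2=\frac{2\mathbf{L}\alpha c_H}{\mathbf{L}+\alpha}$. Fix $J\in\mathbb{N}$, assume $t(k)\ge J$ for all $k\ge0$ and $$0<\mu<\min\Big\{\frac{2C_H}{\mathbf{L}+\alpha},\ \frac{C_2}{C_2+L(1+\sqrt2)}\cdot\frac{1-\beta^J}{L\beta^J}\Big\}.$$ For the NEAR-DGD$^+$ iterates let $A_k=\sqrt n\|\bar x_k-[\bar x_k]\|$ and $B_k=\|\mathbf{x}_k-\bar{\mathbf{x}}_k\|$, let $\gamma=\frac{1-\sqrt{1-C_2\mu}}{\mu L}$, and $$R=\max\Big\{A_0,\ B_0/\gamma,\ \frac{\mu D\beta^J}{\gamma-(\gamma+(1+\gamma)\mu L)\beta^J}\Big\}.$$ Then $A_k\le R$ and $B_k\le\gamma R$ for all $k\ge0$.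
   Context: Let $n,p\in\mathbb{N}$. $W$ is an $n\times n$ doubly stochastic matrix whose associated directed graph is strongly connected with a self-loop at every vertex; $1_n$ is the all-ones vector and $\beta\in[0,1)$ is the spectral norm of $W-\frac1n1_n1_n^\top$. $f_i:\mathbb{R}^p\to\mathbb{R}$, $f=\frac1n\sum_if_i$, $X^*$ the set of minimizers of $f$ and $[x]$ the Euclidean projection onto $X^*$. $h$ is $L$-smooth if $\|\nabla h(x)-\nabla h(y)\|\le L\|x-y\|$; $\alpha$-strongly convex if $h(y)\ge h(x)+\langle y-x,\nabla h(x)\rangle+\frac\alpha2\|y-x\|^2$. $c_H>0$ is a Hoffman coefficient: $\|Hx-H[x]\|^2\ge c_H\|x-[x]\|^2$ for all $x$; $C_H=1/\|H\|_2^2$ with $\|H\|_2$ the operator norm. NEAR-DGD$^+$: $\mathbf{x}_{k+1}=(W^{t(k)}\otimes I_p)(\mathbf{x}_k-\mu\nabla F(\mathbf{x}_k))$ with $\nabla F(\mathbf{x})=(\nabla f_1(x_1)^\top,\dots,\nabla f_n(x_n)^\top)^\top$ for $\mathbf{x}=(x_1^\top,\dots,x_n^\top)^\top$, $\otimes$ Kronecker product, $t(k)\in\mathbb{N}$; $\bar x_k=\frac1n\sum_ix_{i,k}$, $\bar{\mathbf{x}}_k=1_n\otimes\bar x_k$. Norms are Euclidean. *)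

theory Defs
  imports "HOL-Analysis.Analysis"
begin

fun matpow :: "real^'n^'n \<Rightarrow> nat \<Rightarrow> real^'n^'n" where
  "matpow W 0 = mat 1"
| "matpow W (Suc k) = W ** matpow W k"

text \<open>(M \<otimes> I_p) applied to a stacked vector (one block of dimension p per agent).\<close>
definition kron_apply :: "real^'n^'n \<Rightarrow> real^'p^'n \<Rightarrow> real^'p^'n" where
  "kron_apply M y = (\<chi> i. \<Sum>j\<in>UNIV. (M $ i $ j) *\<^sub>R (y $ j))"

definition doubly_stochastic :: "real^'n^'n \<Rightarrow> bool" where
  "doubly_stochastic W \<longleftrightarrow> (\<forall>i j. 0 \<le> W $ i $ j)
     \<and> (\<forall>i. (\<Sum>j\<in>UNIV. W $ i $ j) = 1) \<and> (\<forall>j. (\<Sum>i\<in>UNIV. W $ i $ j) = 1)"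

definition assoc_graph :: "real^'n^'n \<Rightarrow> ('n \<times> 'n) set" where
  "assoc_graph W = {(i, j). W $ i $ j > 0}"

definition strongly_connected_with_loops :: "real^'n^'n \<Rightarrow> bool" where
  "strongly_connected_with_loops W \<longleftrightarrow>
     (\<forall>i. (i, i) \<in> assoc_graph W) \<and> (\<forall>i j. (i, j) \<in> (assoc_graph W)\<^sup>*)"

definition beta_of :: "real^'n^'n \<Rightarrow> real" where
  "beta_of W = onorm (\<lambda>v. (W - (\<chi> i j. 1 / real CARD('n))) *v v)"

definition is_gradient :: "('a::real_inner \<Rightarrow> real) \<Rightarrow> ('a \<Rightarrow> 'a) \<Rightarrow> bool" where
  "is_gradient h gh \<longleftrightarrow> (\<forall>x. (h has_derivative (\<lambda>v. gh x \<bullet> v)) (at x))"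

definition smooth :: "('a::real_inner \<Rightarrow> real) \<Rightarrow> ('a \<Rightarrow> 'a) \<Rightarrow> real \<Rightarrow> bool" where
  "smooth h gh L \<longleftrightarrow> is_gradient h gh \<and> (\<forall>x y. norm (gh x - gh y) \<le> L * norm (x - y))"

definition strongly_convex :: "('a::real_inner \<Rightarrow> real) \<Rightarrow> ('a \<Rightarrow> 'a) \<Rightarrow> real \<Rightarrow> bool" where
  "strongly_convex h gh a \<longleftrightarrow> is_gradient h gh \<and>
     (\<forall>x y. h y \<ge> h x + (y - x) \<bullet> gh x + a / 2 * (norm (y - x))\<^sup>2)"

definition minimizers :: "('a \<Rightarrow> real) \<Rightarrow> 'a set" where
  "minimizers h = {x. \<forall>y. h x \<le> h y}"

definition near_dgd_plus ::
  "real^'n^'n \<Rightarrow> real \<Rightarrow> ('n \<Rightarrow> real^'p \<Rightarrow> real^'p) \<Rightarrow> (nat \<Rightarrow> nat) \<Rightarrow> (nat \<Rightarrow> real^'p^'n) \<Rightarrow> bool" where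
  "near_dgd_plus W \<mu> gf t x \<longleftrightarrow>
     (\<forall>k. x (Suc k) = kron_apply (matpow W (t k)) (x k - \<mu> *\<^sub>R (\<chi> i. gf i (x k $ i))))"

definition avg :: "real^'p^'n \<Rightarrow> real^'p" where
  "avg y = (1 / real CARD('n)) *\<^sub>R (\<Sum>i\<in>UNIV. y $ i)"

end

theory Submission
  imports Defs
begin


lemma descent:
  fixes h :: "'a::real_inner \<Rightarrow> real"
  assumes "smooth h gh M"
  shows "h y \<le> h x + (y - x) \<bullet> gh x + M / 2 * (norm (y - x))\<^sup>2"
proof -
  define d where "d = y - x"
  have grad: "\<And>z. (h has_derivative (\<lambda>v. gh z \<bullet> v)) (at z)"
    and lip: "\<And>a b. norm (gh a - gh b) \<le> M * norm (a - b)"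
    using assms unfolding smooth_def is_gradient_def by auto
  define \<psi> where "\<psi> t = h (x + t *\<^sub>R d) - t * (gh x \<bullet> d) - M / 2 * t\<^sup>2 * (norm d)\<^sup>2" for t
  have D: "DERIV \<psi> t :> (gh (x + t *\<^sub>R d) \<bullet> d - gh x \<bullet> d - M * t * (norm d)\<^sup>2)" for t
  proof -
    have l: "((\<lambda>t. x + t *\<^sub>R d) has_derivative (\<lambda>s. s *\<^sub>R d)) (at t)"
      by (auto intro!: derivative_eq_intros)
    have c: "((\<lambda>t. h (x + t *\<^sub>R d)) has_derivative (\<lambda>s. gh (x + t *\<^sub>R d) \<bullet> (s *\<^sub>R d))) (at t)"
      using has_derivative_compose[OF l grad] by simp
    have c2: "((\<lambda>t. h (x + t *\<^sub>R d)) has_real_derivative (gh (x + t *\<^sub>R d) \<bullet> d)) (at t)"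
    proof -
      have e: "(\<lambda>s. s * (gh (x + t *\<^sub>R d) \<bullet> d)) = (*) (gh (x + t *\<^sub>R d) \<bullet> d)"
        by (auto simp: mult.commute)
      show ?thesis using c by (simp add: has_field_derivative_def e)
    qed
    show ?thesis unfolding \<psi>_def
      by (rule derivative_eq_intros c2 | simp)+
  qed
  have "\<psi> 1 \<le> \<psi> 0"
  proof (rule DERIV_nonpos_imp_nonincreasing[of 0 1 \<psi>])
    fix t :: real assume t: "0 \<le> t" "t \<le> 1"
    have "gh (x + t *\<^sub>R d) \<bullet> d - gh x \<bullet> d = (gh (x + t *\<^sub>R d) - gh x) \<bullet> d"
      by (simp add: inner_diff_left)
    also have "\<dots> \<le> norm (gh (x + t *\<^sub>R d) - gh x) * norm d"
      by (rule norm_cauchy_schwarz)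
    also have "\<dots> \<le> M * norm (t *\<^sub>R d) * norm d"
      using lip[of "x + t *\<^sub>R d" x] by (simp add: mult_right_mono)
    also have "\<dots> = M * t * (norm d)\<^sup>2" using t by (simp add: power2_eq_square)
    finally show "\<exists>y. DERIV \<psi> t :> y \<and> y \<le> 0" using D by force
  qed simp
  then show ?thesis unfolding \<psi>_def d_def by (simp add: inner_commute)
qed



lemma sc_lower:
  fixes g :: "'a::real_inner \<Rightarrow> real"
  assumes "strongly_convex g gg a"
  shows "g y \<ge> g x + (y - x) \<bullet> gg x + a / 2 * (norm (y - x))\<^sup>2"
  using assms unfolding strongly_convex_def by blast

lemma phi_ident:
  fixes x y :: "'a::real_inner"
  shows "a / 2 * (norm (y - x))\<^sup>2 - a / 2 * (norm y)\<^sup>2 + a / 2 * (norm x)\<^sup>2 = - a * ((y - x) \<bullet> x)"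
  by (simp add: power2_norm_eq_inner inner_diff_left inner_diff_right inner_commute algebra_simps)

lemma smooth_ge_sc:
  fixes g :: "real^'m \<Rightarrow> real"
  assumes "strongly_convex g gg a" "smooth g gg M"
  shows "a \<le> M"
proof -
  obtain i :: 'm where True by blast
  define d :: "real^'m" where "d = axis i 1"
  have "g d \<ge> g 0 + (d - 0) \<bullet> gg 0 + a / 2 * (norm (d - 0))\<^sup>2" by (rule sc_lower[OF assms(1)])
  moreover have "g d \<le> g 0 + (d - 0) \<bullet> gg 0 + M / 2 * (norm (d - 0))\<^sup>2" by (rule descent[OF assms(2)])
  moreover have "norm d = 1" unfolding d_def by simp
  ultimately show ?thesis by simp
qed

lemma cocoercive:
  fixes g :: "'a::real_inner \<Rightarrow> real"
  assumes sc: "strongly_convex g gg a" and sm: "smooth g gg Lg" and apos: "a > 0" and aL: "a \<le> Lg"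
  shows "(gg y - gg x) \<bullet> (y - x) \<ge> a * Lg / (a + Lg) * (norm (y - x))\<^sup>2 + 1 / (a + Lg) * (norm (gg y - gg x))\<^sup>2"
proof -
  define M where "M = Lg - a"
  define \<phi> where "\<phi> z = g z - a / 2 * (norm z)\<^sup>2" for z
  define g\<phi> where "g\<phi> z = gg z - a *\<^sub>R z" for z
  have low: "\<phi> q \<ge> \<phi> p + (q - p) \<bullet> g\<phi> p" for p q
  proof -
    have "g q \<ge> g p + (q - p) \<bullet> gg p + a / 2 * (norm (q - p))\<^sup>2" by (rule sc_lower[OF sc])
    moreover note phi_ident[of a q p]
    ultimately show ?thesis unfolding \<phi>_def g\<phi>_def by (simp add: inner_diff_right algebra_simps)
  qed
  have up: "\<phi> q \<le> \<phi> p + (q - p) \<bullet> g\<phi> p + M / 2 * (norm (q - p))\<^sup>2" for p q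
  proof -
    have "g q \<le> g p + (q - p) \<bullet> gg p + Lg / 2 * (norm (q - p))\<^sup>2" by (rule descent[OF sm])
    moreover note phi_ident[of a q p]
    ultimately show ?thesis unfolding \<phi>_def g\<phi>_def M_def by (simp add: inner_diff_right algebra_simps diff_divide_distrib)
  qed
  define d where "d = y - x"
  define v where "v = g\<phi> y - g\<phi> x"
  have one: "\<phi> q \<ge> \<phi> p + (q - p) \<bullet> g\<phi> p + (s - M * s\<^sup>2 / 2) * (norm (g\<phi> q - g\<phi> p))\<^sup>2" for p q s
  proof -
    define w where "w = g\<phi> q - g\<phi> p"
    define z where "z = q - s *\<^sub>R w"
    have 1: "\<phi> z \<ge> \<phi> p + (z - p) \<bullet> g\<phi> p" by (rule low)
    have 2: "\<phi> z \<le> \<phi> q + (z - q) \<bullet> g\<phi> q + M / 2 * (norm (z - q))\<^sup>2" by (rule up)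
    have e1: "(z - p) \<bullet> g\<phi> p = (q - p) \<bullet> g\<phi> p - s * (w \<bullet> g\<phi> p)" unfolding z_def by (simp add: inner_diff_left algebra_simps)
    have e2: "(z - q) \<bullet> g\<phi> q = - s * (w \<bullet> g\<phi> q)" unfolding z_def by simp
    have e3: "(norm (z - q))\<^sup>2 = s\<^sup>2 * (norm w)\<^sup>2" unfolding z_def by (simp add: power_mult_distrib)
    have e4: "w \<bullet> g\<phi> q - w \<bullet> g\<phi> p = (norm w)\<^sup>2" unfolding w_def by (simp add: power2_norm_eq_inner inner_diff_right)
    show ?thesis using 1 2 e1 e2 e3 e4 unfolding w_def[symmetric] by (simp add: algebra_simps)
  qed
  have key: "d \<bullet> v \<ge> 2 * (s - M * s\<^sup>2 / 2) * (norm v)\<^sup>2" for s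
  proof -
    have "\<phi> y \<ge> \<phi> x + (y - x) \<bullet> g\<phi> x + (s - M * s\<^sup>2 / 2) * (norm (g\<phi> y - g\<phi> x))\<^sup>2" by (rule one)
    moreover have "\<phi> x \<ge> \<phi> y + (x - y) \<bullet> g\<phi> y + (s - M * s\<^sup>2 / 2) * (norm (g\<phi> x - g\<phi> y))\<^sup>2" by (rule one)
    moreover have "norm (g\<phi> x - g\<phi> y) = norm v" unfolding v_def by (rule norm_minus_commute)
    moreover have "(x - y) \<bullet> g\<phi> y = - (d \<bullet> g\<phi> y)" unfolding d_def by (simp add: inner_diff_left)
    moreover have "d \<bullet> v = d \<bullet> g\<phi> y - d \<bullet> g\<phi> x" unfolding v_def by (simp add: inner_diff_right)
    ultimately show ?thesis unfolding d_def[symmetric] v_def[symmetric] by (simp add: algebra_simps)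
  qed
  define \<Delta> where "\<Delta> = gg y - gg x"
  have vD: "v = \<Delta> - a *\<^sub>R d" unfolding v_def g\<phi>_def \<Delta>_def d_def by (simp add: algebra_simps)
  have dv: "d \<bullet> v = d \<bullet> \<Delta> - a * (norm d)\<^sup>2" unfolding vD by (simp add: inner_diff_right power2_norm_eq_inner)
  have nv: "(norm v)\<^sup>2 = (norm \<Delta>)\<^sup>2 - 2 * a * (d \<bullet> \<Delta>) + a\<^sup>2 * (norm d)\<^sup>2"
    unfolding vD power2_norm_eq_inner by (simp add: inner_diff_left inner_diff_right inner_commute algebra_simps power2_eq_square)
  have main: "(Lg + a) * (d \<bullet> \<Delta>) \<ge> (norm \<Delta>)\<^sup>2 + a * Lg * (norm d)\<^sup>2"
  proof (cases "M = 0")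
    case True
    have "v = 0"
    proof (rule ccontr)
      assume "v \<noteq> 0"
      then have p: "(norm v)\<^sup>2 > 0" by simp
      have "d \<bullet> v \<ge> 2 * ((d \<bullet> v + 1) / (2 * (norm v)\<^sup>2)) * (norm v)\<^sup>2"
        using key[of "(d \<bullet> v + 1) / (2 * (norm v)\<^sup>2)"] True by simp
      moreover have "2 * ((d \<bullet> v + 1) / (2 * (norm v)\<^sup>2)) * (norm v)\<^sup>2 = d \<bullet> v + 1" using p by (simp add: field_simps)
      ultimately show False by simp
    qed
    then have "(norm v)\<^sup>2 = 0" "d \<bullet> v = 0" by auto
    then show ?thesis using dv nv True unfolding M_def by (simp add: algebra_simps power2_eq_square)
  next
    case False
    then have Mp: "M > 0" using aL M_def by simp
    have "d \<bullet> v \<ge> 2 * (1 / M - M * (1 / M)\<^sup>2 / 2) * (norm v)\<^sup>2" by (rule key)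
    also have "2 * (1 / M - M * (1 / M)\<^sup>2 / 2) = 1 / M" using Mp by (simp add: field_simps power2_eq_square)
    finally have "M * (d \<bullet> v) \<ge> (norm v)\<^sup>2" using Mp by (simp add: field_simps)
    then show ?thesis using dv nv unfolding M_def by (simp add: algebra_simps power2_eq_square)
  qed
  have pos: "a + Lg > 0" using apos aL by simp
  have "(gg y - gg x) \<bullet> (y - x) = d \<bullet> \<Delta>" unfolding d_def \<Delta>_def by (simp add: inner_commute)
  moreover have "a * Lg / (a + Lg) * (norm (y - x))\<^sup>2 + 1 / (a + Lg) * (norm (gg y - gg x))\<^sup>2
     = ((norm \<Delta>)\<^sup>2 + a * Lg * (norm d)\<^sup>2) / (a + Lg)" unfolding d_def \<Delta>_def
    by (simp add: add_divide_distrib algebra_simps)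
  moreover have "((norm \<Delta>)\<^sup>2 + a * Lg * (norm d)\<^sup>2) / (a + Lg) \<le> d \<bullet> \<Delta>"
    using main pos by (simp add: pos_divide_le_eq algebra_simps)
  ultimately show ?thesis by simp
qed



lemma contraction:
  fixes g :: "real^'m \<Rightarrow> real" and H :: "real^'p^'m" and Gf :: "real^'p \<Rightarrow> real^'p"
  assumes sc: "strongly_convex g gg a" and sm: "smooth g gg Lg" and apos: "a > 0" and aL: "a \<le> Lg"
    and G1: "\<And>z v. Gf z \<bullet> v = gg (H *v z) \<bullet> (H *v v)"
    and Gp: "Gf p = 0"
    and NH: "\<And>v. norm (H *v v) \<le> NH * norm v" and NHpos: "NH > 0"
    and hof: "(norm (H *v (z - p)))\<^sup>2 \<ge> cH * (norm (z - p))\<^sup>2" and cH: "cH > 0"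
    and mu: "0 < \<mu>" "\<mu> < 2 * (1 / NH\<^sup>2) / (Lg + a)"
  shows "(norm (z - p - \<mu> *\<^sub>R Gf z))\<^sup>2 \<le> (1 - 2 * Lg * a * cH / (Lg + a) * \<mu>) * (norm (z - p))\<^sup>2"
proof -
  define e where "e = z - p"
  define \<Delta> where "\<Delta> = gg (H *v z) - gg (H *v p)"
  define G where "G = Gf z"
  have GD: "G \<bullet> w = \<Delta> \<bullet> (H *v w)" for w
  proof -
    have "gg (H *v p) \<bullet> (H *v w) = 0" using G1[of p w] Gp by simp
    then show ?thesis unfolding G_def \<Delta>_def using G1[of z w] by (simp add: inner_diff_left)
  qed
  have He: "H *v e = H *v z - H *v p" unfolding e_def by (simp add: matrix_vector_mult_diff_distrib)
  have coc: "\<Delta> \<bullet> (H *v e) \<ge> a * Lg / (a + Lg) * (norm (H *v e))\<^sup>2 + 1 / (a + Lg) * (norm \<Delta>)\<^sup>2"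
    using cocoercive[OF sc sm apos aL, of "H *v z" "H *v p"] unfolding He \<Delta>_def .
  have nG: "norm G \<le> NH * norm \<Delta>"
  proof -
    have "(norm G)\<^sup>2 = \<Delta> \<bullet> (H *v G)" using GD[of G] by (simp add: power2_norm_eq_inner)
    also have "\<dots> \<le> norm \<Delta> * norm (H *v G)" by (rule norm_cauchy_schwarz)
    also have "\<dots> \<le> norm \<Delta> * (NH * norm G)" by (simp add: NH mult_left_mono)
    finally have "norm G * norm G \<le> (NH * norm \<Delta>) * norm G" by (simp add: power2_eq_square algebra_simps)
    then show ?thesis
      by (cases "norm G = 0") (auto simp: mult_le_cancel_right NHpos less_imp_le)
  qed
  have nG2: "(norm G)\<^sup>2 \<le> NH\<^sup>2 * (norm \<Delta>)\<^sup>2"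
    using power_mono[OF nG norm_ge_zero, of 2] by (simp add: power_mult_distrib)
  have exp: "(norm (e - \<mu> *\<^sub>R G))\<^sup>2 = (norm e)\<^sup>2 - 2 * \<mu> * (e \<bullet> G) + \<mu>\<^sup>2 * (norm G)\<^sup>2"
    unfolding power2_norm_eq_inner by (simp add: inner_diff_left inner_diff_right inner_commute algebra_simps power2_eq_square)
  have eG: "e \<bullet> G = \<Delta> \<bullet> (H *v e)" using GD[of e] by (simp add: inner_commute)
  have apL: "a + Lg > 0" using apos aL by simp
  have c1: "\<mu> * NH\<^sup>2 < 2 / (a + Lg)"
  proof -
    have "\<mu> < 2 / (NH\<^sup>2 * (Lg + a))" using mu(2) by (simp add: field_simps)
    moreover have "NH\<^sup>2 * (Lg + a) > 0" using NHpos apL by simp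
    ultimately have "\<mu> * (NH\<^sup>2 * (Lg + a)) < 2" by (simp add: pos_less_divide_eq)
    then show ?thesis using apL by (simp add: pos_less_divide_eq algebra_simps)
  qed
  have t3: "\<mu>\<^sup>2 * (norm G)\<^sup>2 \<le> 2 * \<mu> / (a + Lg) * (norm \<Delta>)\<^sup>2"
  proof -
    have "\<mu>\<^sup>2 * (norm G)\<^sup>2 \<le> \<mu>\<^sup>2 * (NH\<^sup>2 * (norm \<Delta>)\<^sup>2)" using nG2 by (simp add: mult_left_mono)
    also have "\<dots> = \<mu> * (\<mu> * NH\<^sup>2) * (norm \<Delta>)\<^sup>2" by (simp add: power2_eq_square)
    also have "\<dots> \<le> \<mu> * (2 / (a + Lg)) * (norm \<Delta>)\<^sup>2"
      using c1 mu(1) by (intro mult_right_mono mult_left_mono) auto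
    finally show ?thesis by (simp add: mult.commute mult.left_commute)
  qed
  have "(norm (e - \<mu> *\<^sub>R G))\<^sup>2 \<le> (norm e)\<^sup>2 - 2 * \<mu> * (a * Lg / (a + Lg) * (norm (H *v e))\<^sup>2)"
  proof -
    have "2 * \<mu> * (e \<bullet> G) \<ge> 2 * \<mu> * (a * Lg / (a + Lg) * (norm (H *v e))\<^sup>2 + 1 / (a + Lg) * (norm \<Delta>)\<^sup>2)"
      using coc eG mu(1) by simp
    then show ?thesis using exp t3 by (simp add: algebra_simps)
  qed
  also have "\<dots> \<le> (norm e)\<^sup>2 - 2 * \<mu> * (a * Lg / (a + Lg) * (cH * (norm e)\<^sup>2))"
  proof -
    have X: "a * Lg / (a + Lg) * (cH * (norm e)\<^sup>2) \<le> a * Lg / (a + Lg) * (norm (H *v e))\<^sup>2"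
      using hof apL apos aL unfolding e_def by (intro mult_left_mono) auto
    have "2 * \<mu> * (a * Lg / (a + Lg) * (cH * (norm e)\<^sup>2)) \<le> 2 * \<mu> * (a * Lg / (a + Lg) * (norm (H *v e))\<^sup>2)"
      using mult_left_mono[OF X, of "2 * \<mu>"] mu(1) by simp
    then show ?thesis by linarith
  qed
  also have "\<dots> = (1 - 2 * Lg * a * cH / (Lg + a) * \<mu>) * (norm e)\<^sup>2"
    by (simp add: algebra_simps add.commute)
  finally show ?thesis unfolding e_def G_def by (simp add: algebra_simps)
qed



definition col :: "real^'p^'n \<Rightarrow> 'p \<Rightarrow> real^'n" where
  "col y c = (\<chi> j. y $ j $ c)"

definition mean :: "real^'n \<Rightarrow> real" where
  "mean u = (\<Sum>i\<in>UNIV. u $ i) / real CARD('n)"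

definition onev :: "real^'n" where "onev = (\<chi> i. 1)"

lemma norm_sq_cols: "(norm (y::real^'p^'n))\<^sup>2 = (\<Sum>c\<in>UNIV. (norm (col y c))\<^sup>2)"
  unfolding power2_norm_eq_inner inner_vec_def col_def
  by (simp add: sum.swap[of _ "UNIV::'n set"])

lemma norm_sq_rows: "(norm (y::real^'p^'n))\<^sup>2 = (\<Sum>i\<in>UNIV. (norm (y $ i))\<^sup>2)"
  unfolding power2_norm_eq_inner inner_vec_def by simp

lemma col_kron: "col (kron_apply M y) c = M *v col y c"
  unfolding col_def kron_apply_def matrix_vector_mult_def by (simp add: vec_eq_iff)

lemma col_diff: "col (y - z) c = col y c - col z c"
  unfolding col_def by (simp add: vec_eq_iff)

lemma col_scaleR: "col (a *\<^sub>R y) c = a *\<^sub>R col y c"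
  unfolding col_def by (simp add: vec_eq_iff)

lemma col_stack: "col (\<chi> i. v) c = (v $ c) *\<^sub>R onev"
  unfolding col_def onev_def by (simp add: vec_eq_iff)

lemma avg_col: "avg y $ c = mean (col y c)"
  unfolding avg_def mean_def col_def by simp

lemma avg_diff: "avg (y - z) = avg y - avg z"
  unfolding avg_def by (simp add: sum_subtractf algebra_simps)

lemma avg_scaleR: "avg (a *\<^sub>R y) = a *\<^sub>R avg y"
  unfolding avg_def by (simp add: scaleR_sum_right[symmetric])

lemma mean_diff: "mean (u - v) = mean u - mean v"
  unfolding mean_def by (simp add: sum_subtractf diff_divide_distrib)

lemma mean_scaleR: "mean (a *\<^sub>R u) = a * mean u"
  unfolding mean_def by (simp add: sum_distrib_left[symmetric])

lemma mean_onev: "mean (onev :: real^'n) = 1"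
  unfolding mean_def onev_def by simp

lemma kron_bound:
  assumes "\<And>v. norm (M *v v) \<le> b * norm v" "b \<ge> 0"
  shows "norm (kron_apply M y) \<le> b * norm y"
proof -
  have "(norm (kron_apply M y))\<^sup>2 = (\<Sum>c\<in>UNIV. (norm (M *v col y c))\<^sup>2)"
    by (simp add: norm_sq_cols col_kron)
  also have "\<dots> \<le> (\<Sum>c\<in>UNIV. (b * norm (col y c))\<^sup>2)"
    by (intro sum_mono power_mono assms) auto
  also have "\<dots> = (b * norm y)\<^sup>2"
    by (simp add: power_mult_distrib norm_sq_cols[of y] sum_distrib_left)
  finally show ?thesis using assms(2) by (simp add: power2_le_iff_abs_le)
qed

lemma ds_row: "doubly_stochastic W \<Longrightarrow> W *v onev = onev"
  unfolding doubly_stochastic_def onev_def matrix_vector_mult_def by (simp add: vec_eq_iff)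

lemma ds_col: assumes "doubly_stochastic W" shows "mean (W *v u) = mean u"
proof -
  have "(\<Sum>i\<in>UNIV. (W *v u) $ i) = (\<Sum>i\<in>UNIV. \<Sum>j\<in>UNIV. W $ i $ j * u $ j)"
    unfolding matrix_vector_mult_def by simp
  also have "\<dots> = (\<Sum>j\<in>UNIV. \<Sum>i\<in>UNIV. W $ i $ j * u $ j)" by (rule sum.swap)
  also have "\<dots> = (\<Sum>j\<in>UNIV. (\<Sum>i\<in>UNIV. W $ i $ j) * u $ j)" by (simp add: sum_distrib_right)
  also have "\<dots> = (\<Sum>j\<in>UNIV. u $ j)" using assms unfolding doubly_stochastic_def by simp
  finally show ?thesis unfolding mean_def by simp
qed

lemma matpow_mult: "matpow W (Suc t) *v u = W *v (matpow W t *v u)"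
  by (simp add: matrix_vector_mul_assoc)

lemma matpow_row: "doubly_stochastic W \<Longrightarrow> matpow W t *v onev = onev"
  by (induction t) (simp_all only: matpow_mult ds_row, simp)

lemma matpow_col: "doubly_stochastic W \<Longrightarrow> mean (matpow W t *v u) = mean u"
  by (induction t) (simp_all only: matpow_mult ds_col, simp)

lemma avg_kron_matpow:
  assumes "doubly_stochastic W"
  shows "avg (kron_apply (matpow W t) y) = avg y"
  by (simp add: vec_eq_iff avg_col col_kron matpow_col[OF assms])

lemma beta_bound:
  fixes W :: "real^'n^'n"
  shows "norm ((W - (\<chi> i j. 1 / real CARD('n))) *v v) \<le> beta_of W * norm v"
  unfolding beta_of_def by (rule onorm) simp

lemma beta_nonneg: "beta_of W \<ge> 0"
  unfolding beta_of_def by (rule onorm_pos_le) simp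

lemma J_apply: "(\<chi> i j. 1 / real CARD('n)) *v (u::real^'n) = mean u *\<^sub>R (onev :: real^'n)"
  unfolding matrix_vector_mult_def mean_def onev_def
  by (simp add: vec_eq_iff sum_divide_distrib)

lemma dev_contract:
  fixes W :: "real^'n^'n"
  assumes ds: "doubly_stochastic W"
  shows "norm (matpow W t *v u - mean u *\<^sub>R onev) \<le> beta_of W ^ t * norm (u - mean u *\<^sub>R onev)"
proof -
  define P where "P = W - (\<chi> i j. 1 / real CARD('n))"
  have P0: "mean v = 0 \<Longrightarrow> P *v v = W *v v" for v
    unfolding P_def by (simp add: matrix_vector_mult_diff_rdistrib J_apply)
  have "mean v = 0 \<Longrightarrow> matpow W t *v v = matpow P t *v v \<and> norm (matpow P t *v v) \<le> beta_of W ^ t * norm v" for v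
  proof (induction t)
    case 0 then show ?case by simp
  next
    case (Suc t)
    have m: "mean (matpow W t *v v) = 0" using matpow_col[OF ds] Suc.prems by simp
    have e: "matpow W (Suc t) *v v = matpow P (Suc t) *v v"
      using Suc P0[OF m] by (simp only: matpow_mult)
    have "norm (matpow P (Suc t) *v v) = norm (P *v (matpow P t *v v))"
      by (simp only: matpow_mult)
    also have "\<dots> \<le> beta_of W * norm (matpow P t *v v)" unfolding P_def by (rule beta_bound)
    also have "\<dots> \<le> beta_of W * (beta_of W ^ t * norm v)"
      using Suc beta_nonneg by (intro mult_left_mono) auto
    finally show ?case using e by simp
  qed
  moreover have "mean (u - mean u *\<^sub>R onev) = 0" by (simp add: mean_diff mean_scaleR mean_onev)
  moreover have "matpow W t *v (u - mean u *\<^sub>R onev) = matpow W t *v u - mean u *\<^sub>R onev"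
    by (simp add: matrix_vector_mult_diff_distrib matrix_vector_mult_scaleR matpow_row[OF ds])
  ultimately show ?thesis by metis
qed

lemma stack_col: "col (y - (\<chi> i. avg y)) c = col y c - mean (col y c) *\<^sub>R onev"
  by (simp add: col_diff col_stack avg_col)

lemma consensus:
  fixes W :: "real^'n^'n"
  assumes ds: "doubly_stochastic W"
  shows "norm (kron_apply (matpow W t) y - (\<chi> i. avg (kron_apply (matpow W t) y)))
     \<le> beta_of W ^ t * norm (y - (\<chi> i. avg y))"
proof -
  have "(norm (kron_apply (matpow W t) y - (\<chi> i. avg (kron_apply (matpow W t) y))))\<^sup>2
      = (\<Sum>c\<in>UNIV. (norm (matpow W t *v col y c - mean (col y c) *\<^sub>R onev))\<^sup>2)"
    unfolding norm_sq_cols[of "kron_apply (matpow W t) y - _"] stack_col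
    by (simp add: col_kron matpow_col[OF ds])
  also have "\<dots> \<le> (\<Sum>c\<in>UNIV. (beta_of W ^ t * norm (col y c - mean (col y c) *\<^sub>R onev))\<^sup>2)"
    by (intro sum_mono power_mono dev_contract[OF ds]) auto
  also have "\<dots> = (beta_of W ^ t * norm (y - (\<chi> i. avg y)))\<^sup>2"
    unfolding power_mult_distrib norm_sq_cols[of "y - _"] stack_col by (simp add: sum_distrib_left)
  finally show ?thesis using beta_nonneg[of W]
    by (simp add: power2_le_iff_abs_le)
qed

lemma dev_le: "norm (u - mean u *\<^sub>R (onev::real^'n)) \<le> norm u"
proof -
  have "u \<bullet> onev = real CARD('n) * mean u" unfolding mean_def onev_def inner_vec_def by simp
  moreover have "onev \<bullet> (onev::real^'n) = real CARD('n)" unfolding onev_def inner_vec_def by simp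
  ultimately have "(norm (u - mean u *\<^sub>R onev))\<^sup>2 = (norm u)\<^sup>2 - real CARD('n) * (mean u)\<^sup>2"
    unfolding power2_norm_eq_inner by (simp add: inner_diff_left inner_diff_right inner_commute algebra_simps power2_eq_square)
  then have "(norm (u - mean u *\<^sub>R onev))\<^sup>2 \<le> (norm u)\<^sup>2" by simp
  then show ?thesis by (simp add: power2_le_iff_abs_le)
qed

lemma stack_dev_le: "norm (y - (\<chi> i. avg y)) \<le> norm (y::real^'p^'n)"
proof -
  have "(norm (y - (\<chi> i. avg y)))\<^sup>2 \<le> (norm y)\<^sup>2"
    unfolding norm_sq_cols[of "y - _"] norm_sq_cols[of y] stack_col
    by (intro sum_mono power_mono dev_le) auto
  then show ?thesis by (simp add: power2_le_iff_abs_le)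
qed

lemma norm_stack: "norm ((\<chi> i. v) :: real^'p^'n) = sqrt (real CARD('n)) * norm v"
proof -
  have "(norm ((\<chi> i. v) :: real^'p^'n))\<^sup>2 = real CARD('n) * (norm v)\<^sup>2" by (simp add: norm_sq_rows)
  then show ?thesis by (metis norm_ge_zero real_sqrt_abs real_sqrt_mult abs_norm_cancel)
qed



theorem lemma6p1:
  fixes W :: "real^'n^'n"
    and f :: "'n \<Rightarrow> real^'p \<Rightarrow> real" and gf :: "'n \<Rightarrow> real^'p \<Rightarrow> real^'p"
    and Lf :: "'n \<Rightarrow> real"
    and g :: "real^'m \<Rightarrow> real" and gg :: "real^'m \<Rightarrow> real^'m"
    and H :: "real^'p^'m" and \<alpha> Lg cH \<mu> :: real
    and J :: nat and t :: "nat \<Rightarrow> nat" and x :: "nat \<Rightarrow> real^'p^'n"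
  defines "n \<equiv> real CARD('n)"
  defines "\<beta> \<equiv> beta_of W"
  defines "F \<equiv> (\<lambda>z. (1 / n) * (\<Sum>i\<in>UNIV. f i z))"
  defines "Xs \<equiv> minimizers F"
  defines "proj \<equiv> closest_point Xs"
  defines "CH \<equiv> 1 / (onorm (\<lambda>v. H *v v))\<^sup>2"
  defines "D \<equiv> (SUP z\<in>Xs. sqrt (\<Sum>j\<in>UNIV. (norm (gf j z))\<^sup>2))"
  defines "L \<equiv> Max (range Lf)"
  defines "C2 \<equiv> 2 * Lg * \<alpha> * cH / (Lg + \<alpha>)"
  defines "A \<equiv> (\<lambda>k. sqrt n * norm (avg (x k) - proj (avg (x k))))"
  defines "B \<equiv> (\<lambda>k. norm (x k - (\<chi> i. avg (x k))))"
  defines "\<gamma> \<equiv> (1 - sqrt (1 - C2 * \<mu>)) / (\<mu> * L)"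
  defines "R \<equiv> Max {A 0, B 0 / \<gamma>, \<mu> * D * \<beta> ^ J / (\<gamma> - (\<gamma> + (1 + \<gamma>) * \<mu> * L) * \<beta> ^ J)}"
  assumes W_ds: "doubly_stochastic W"
    and W_conn: "strongly_connected_with_loops W"
    and f_smooth: "\<And>i. Lf i > 0 \<and> smooth (f i) (gf i) (Lf i)"
    and g_sc: "\<alpha> > 0" "strongly_convex g gg \<alpha>"
    and g_smooth: "smooth g gg Lg"
    and F_comp: "\<And>z. F z = g (H *v z)"
    and F_min: "Xs \<noteq> {}"
    and D_fin: "bdd_above ((\<lambda>z. sqrt (\<Sum>j\<in>UNIV. (norm (gf j z))\<^sup>2)) ` Xs)"
    and hoffman: "cH > 0" "\<And>z. (norm (H *v z - H *v proj z))\<^sup>2 \<ge> cH * (norm (z - proj z))\<^sup>2"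
    and t_ge: "\<And>k. t k \<ge> J"
    and mu_pos: "0 < \<mu>"
    and mu_bd1: "\<mu> < 2 * CH / (Lg + \<alpha>)"
    and mu_bd2: "\<mu> * (C2 + L * (1 + sqrt 2)) * (L * \<beta> ^ J) < C2 * (1 - \<beta> ^ J)"
    and iter: "near_dgd_plus W \<mu> gf t x"
  shows "\<forall>k. A k \<le> R \<and> B k \<le> \<gamma> * R"
proof -
  have n_pos: "n > 0" unfolding n_def by simp
  have sn_pos: "sqrt n > 0" using n_pos by simp
  have fin_range: "finite (range Lf)" by simp
  have Lf_le: "Lf i \<le> L" for i unfolding L_def by (rule Max_ge) auto
  have L_pos: "L > 0" using Lf_le[of undefined] f_smooth[of undefined] by simp
  have gf_lip: "norm (gf i a - gf i b) \<le> L * norm (a - b)" for i a b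
  proof -
    have "norm (gf i a - gf i b) \<le> Lf i * norm (a - b)"
      using f_smooth[of i] unfolding smooth_def by blast
    also have "\<dots> \<le> L * norm (a - b)" using Lf_le[of i] by (simp add: mult_right_mono)
    finally show ?thesis .
  qed
  have aL: "\<alpha> \<le> Lg" by (rule smooth_ge_sc[OF g_sc(2) g_smooth])
  define Gf where "Gf z = (1 / n) *\<^sub>R (\<Sum>i\<in>UNIV. gf i z)" for z
  have F_der: "(F has_derivative (\<lambda>v. Gf z \<bullet> v)) (at z)" for z
  proof -
    have d: "((\<lambda>z. f i z) has_derivative (\<lambda>v. gf i z \<bullet> v)) (at z)" for i
      using f_smooth[of i] unfolding smooth_def is_gradient_def by blast
    have "((\<lambda>z. (1 / n) * (\<Sum>i\<in>UNIV. f i z)) has_derivative (\<lambda>v. (1 / n) * (\<Sum>i\<in>UNIV. gf i z \<bullet> v))) (at z)"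
      by (intro has_derivative_mult_right has_derivative_sum d)
    moreover have "(\<lambda>v. (1 / n) * (\<Sum>i\<in>UNIV. gf i z \<bullet> v)) = (\<lambda>v. Gf z \<bullet> v)"
      unfolding Gf_def by (simp add: inner_sum_left)
    ultimately show ?thesis unfolding F_def by simp
  qed
  have F_der2: "(F has_derivative (\<lambda>v. gg (H *v z) \<bullet> (H *v v))) (at z)" for z
  proof -
    have FF: "F = (\<lambda>z. g (H *v z))" using F_comp by auto
    have hl: "((\<lambda>z. H *v z) has_derivative (\<lambda>v. H *v v)) (at z)"
      by (rule bounded_linear.has_derivative[OF matrix_vector_mul_bounded_linear has_derivative_ident])
    have hg: "(g has_derivative (\<lambda>v. gg (H *v z) \<bullet> v)) (at (H *v z))"
      using g_smooth unfolding smooth_def is_gradient_def by blast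
    show ?thesis unfolding FF using has_derivative_compose[OF hl hg] by simp
  qed
  have G1: "Gf z \<bullet> v = gg (H *v z) \<bullet> (H *v v)" for z v
    using has_derivative_unique[OF F_der[of z] F_der2[of z]] by meson
  have F_cont: "continuous_on UNIV F"
    using F_der by (meson continuous_at_imp_continuous_on has_derivative_continuous)
  have Xs_closed: "closed Xs"
  proof -
    have "Xs = (\<Inter>y. {z. F z \<le> F y})" unfolding Xs_def minimizers_def by auto
    moreover have "closed {z. F z \<le> F y}" for y
      by (rule closed_Collect_le[OF F_cont]) simp
    ultimately show ?thesis by auto
  qed
  have proj_in: "proj z \<in> Xs" for z unfolding proj_def by (rule closest_point_in_set[OF Xs_closed F_min])
  have proj_le: "q \<in> Xs \<Longrightarrow> norm (z - proj z) \<le> norm (z - q)" for z q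
    using closest_point_le[OF Xs_closed, of q z] unfolding proj_def by (simp add: dist_norm)
  have Gp: "q \<in> Xs \<Longrightarrow> Gf q = 0" for q
  proof -
    assume q: "q \<in> Xs"
    have "(\<lambda>v. Gf q \<bullet> v) = (\<lambda>v. 0)"
      by (rule differential_zero_maxmin[of q UNIV F]) (use q F_der in \<open>auto simp: Xs_def minimizers_def\<close>)
    then have "Gf q \<bullet> Gf q = 0" by meson
    then show ?thesis by simp
  qed
  define NH where "NH = onorm (\<lambda>v. H *v v)"
  have NH_bd: "norm (H *v v) \<le> NH * norm v" for v
    unfolding NH_def by (rule onorm) simp
  have NH_nn: "NH \<ge> 0" unfolding NH_def by (rule onorm_pos_le) simp
  have Lga: "Lg + \<alpha> > 0" using g_sc(1) aL by simp
  have NH_pos: "NH > 0"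
  proof (rule ccontr)
    assume "\<not> NH > 0"
    then have "NH = 0" using NH_nn by simp
    then have "CH = 0" unfolding CH_def NH_def by simp
    then show False using mu_bd1 mu_pos Lga by simp
  qed
  have CH_eq: "CH = 1 / NH\<^sup>2" unfolding CH_def NH_def ..
  have ex_z: "\<exists>z. z \<noteq> proj z"
  proof (rule ccontr)
    assume "\<not> (\<exists>z. z \<noteq> proj z)"
    then have all: "z \<in> Xs" for z using proj_in by metis
    have "H *v v = 0" for v
    proof -
      have eq: "g (H *v (c *\<^sub>R v)) = g (H *v 0)" for c
      proof -
        have "F (c *\<^sub>R v) \<le> F 0" "F 0 \<le> F (c *\<^sub>R v)"
          using all[of "c *\<^sub>R v"] all[of 0] unfolding Xs_def minimizers_def by auto
        then have "F (c *\<^sub>R v) = F 0" by linarith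
        then show ?thesis using F_comp by simp
      qed
      have l: "g (H *v (c *\<^sub>R v)) \<ge> g 0 + (c *\<^sub>R (H *v v) - 0) \<bullet> gg 0 + \<alpha> / 2 * (norm (c *\<^sub>R (H *v v) - 0))\<^sup>2" for c
        using sc_lower[OF g_sc(2), of 0 "c *\<^sub>R (H *v v)"] by (simp add: matrix_vector_mult_scaleR)
      have 1: "0 \<ge> (H *v v) \<bullet> gg 0 + \<alpha> / 2 * (norm (H *v v))\<^sup>2" using l[of 1] eq[of 1] by simp
      have 2: "0 \<ge> - ((H *v v) \<bullet> gg 0) + \<alpha> / 2 * (norm (H *v v))\<^sup>2" using l[of "-1"] eq[of "-1"] by simp
      have "\<alpha> * (norm (H *v v))\<^sup>2 \<le> 0" using 1 2 by simp
      then have "(norm (H *v v))\<^sup>2 \<le> 0" using g_sc(1) by (simp add: mult_le_0_iff)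
      then show ?thesis by simp
    qed
    then have "(\<lambda>v. H *v v) = (\<lambda>v. 0)" by auto
    then have "NH = 0" unfolding NH_def by (simp only: onorm_zero)
    then show False using NH_pos by simp
  qed
  have cH_le: "cH \<le> NH\<^sup>2"
  proof -
    obtain z where z: "z \<noteq> proj z" using ex_z by blast
    have e: "(norm (z - proj z))\<^sup>2 > 0" using z by simp
    have "cH * (norm (z - proj z))\<^sup>2 \<le> (norm (H *v z - H *v proj z))\<^sup>2" by (rule hoffman(2))
    also have "\<dots> \<le> (NH * norm (z - proj z))\<^sup>2"
      using NH_bd[of "z - proj z"] by (intro power_mono) (auto simp: matrix_vector_mult_diff_distrib)
    finally have "cH * (norm (z - proj z))\<^sup>2 \<le> NH\<^sup>2 * (norm (z - proj z))\<^sup>2" by (simp add: power_mult_distrib)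
    then show ?thesis using e by simp
  qed
  have C2_pos: "C2 > 0" unfolding C2_def using g_sc(1) aL hoffman(1) Lga by simp
  have C2mu: "C2 * \<mu> < 1"
  proof -
    have "C2 * \<mu> < C2 * (2 * CH / (Lg + \<alpha>))" using C2_pos mu_bd1 by (simp only: mult_less_cancel_left_pos)
    also have "\<dots> = (4 * Lg * \<alpha> / (Lg + \<alpha>)\<^sup>2) * (cH / NH\<^sup>2)"
      unfolding C2_def CH_eq by (simp add: field_simps power2_eq_square)
    also have "\<dots> \<le> 1 * 1"
    proof (rule mult_mono)
      have "(Lg + \<alpha>)\<^sup>2 - 4 * Lg * \<alpha> = (Lg - \<alpha>)\<^sup>2" by (simp add: power2_eq_square algebra_simps)
      then have "4 * Lg * \<alpha> \<le> (Lg + \<alpha>)\<^sup>2" by (metis diff_ge_0_iff_ge zero_le_power2)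
      then show "4 * Lg * \<alpha> / (Lg + \<alpha>)\<^sup>2 \<le> 1" using Lga by simp
      show "cH / NH\<^sup>2 \<le> 1" using cH_le NH_pos by simp
    qed (use hoffman(1) NH_pos in auto)
    finally show ?thesis by simp
  qed
  define s where "s = sqrt (1 - C2 * \<mu>)"
  have s_nn: "s \<ge> 0" and s_lt: "s < 1" and s_sq: "s\<^sup>2 = 1 - C2 * \<mu>"
    unfolding s_def using C2mu C2_pos mu_pos by auto
  have g_eq: "\<gamma> = (1 - s) / (\<mu> * L)" unfolding \<gamma>_def s_def ..
  have g_pos: "\<gamma> > 0" unfolding g_eq using s_lt mu_pos L_pos by simp
  have gmuL: "\<gamma> * \<mu> * L = 1 - s" unfolding g_eq using mu_pos L_pos by simp
  define b where "b = \<beta> ^ J"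
  have beta_nn: "\<beta> \<ge> 0" unfolding \<beta>_def by (rule beta_nonneg)
  have b_nn: "b \<ge> 0" unfolding b_def using beta_nn by simp
  have b_lt: "b < 1"
  proof -
    have "0 \<le> \<mu> * (C2 + L * (1 + sqrt 2)) * (L * b)"
      using mu_pos C2_pos L_pos b_nn by simp
    then have "0 < C2 * (1 - b)" using mu_bd2 unfolding b_def by linarith
    then show ?thesis using C2_pos by (simp add: zero_less_mult_iff)
  qed
  have J_pos: "J > 0" using b_lt unfolding b_def by (cases J) auto
  have beta_lt: "\<beta> < 1"
  proof (rule ccontr)
    assume "\<not> \<beta> < 1"
    then have "1 \<le> \<beta> ^ J" by (simp add: one_le_power)
    then show False using b_lt unfolding b_def by simp
  qed
  have bt: "\<beta> ^ t k \<le> b" for k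
    unfolding b_def using t_ge[of k] beta_nn beta_lt by (simp add: power_decreasing)
  define \<delta> where "\<delta> = \<gamma> - (\<gamma> + (1 + \<gamma>) * \<mu> * L) * b"
  have delta_pos: "\<delta> > 0"
  proof -
    have muL: "\<mu> * L > 0" using mu_pos L_pos by simp
    have C2m: "C2 * \<mu> = (1 - s) * (1 + s)" using s_sq by (simp add: algebra_simps power2_eq_square)
    have "\<mu> * L * b * (C2 * \<mu> + \<mu> * L * (1 + sqrt 2)) < (1 - s) * (1 + s) * (1 - b)"
    proof -
      have h0: "\<mu> * (\<mu> * (C2 + L * (1 + sqrt 2)) * (L * b)) < \<mu> * (C2 * (1 - b))"
        using mu_bd2 mu_pos unfolding b_def by simp
      have eL: "\<mu> * L * b * (C2 * \<mu> + \<mu> * L * (1 + sqrt 2)) = \<mu> * (\<mu> * (C2 + L * (1 + sqrt 2)) * (L * b))"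
        by (simp add: algebra_simps)
      have eR1: "(1 - s) * (1 + s) * (1 - b) = (C2 * \<mu>) * (1 - b)" using C2m by simp
      have eR2: "(C2 * \<mu>) * (1 - b) = \<mu> * (C2 * (1 - b))" by simp
      show ?thesis unfolding eL eR1 eR2 by (rule h0)
    qed
    moreover have "\<mu> * L * b * ((1 - s) * (1 + s) + \<mu> * L * (1 + s)) \<le> \<mu> * L * b * (C2 * \<mu> + \<mu> * L * (1 + sqrt 2))"
    proof -
      have "1 + s \<le> 1 + sqrt 2"
      proof -
        have r: "(1::real) \<le> sqrt 2" by simp
        show ?thesis using s_lt r by linarith
      qed
      then have "\<mu> * L * (1 + s) \<le> \<mu> * L * (1 + sqrt 2)" using muL by (intro mult_left_mono) auto
      then show ?thesis using C2m muL b_nn by (intro mult_left_mono) auto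
    qed
    ultimately have "\<mu> * L * b * ((1 - s) * (1 + s) + \<mu> * L * (1 + s)) < (1 - s) * (1 + s) * (1 - b)" by linarith
    then have "(1 + s) * (\<mu> * L * b * ((1 - s) + \<mu> * L)) < (1 + s) * ((1 - s) * (1 - b))"
      by (simp add: algebra_simps)
    then have k: "\<mu> * L * b * ((1 - s) + \<mu> * L) < (1 - s) * (1 - b)" using s_nn
      by (simp add: mult_less_cancel_left_pos)
    have "\<mu> * L * \<delta> = (1 - s) * (1 - b) - \<mu> * L * b * ((1 - s) + \<mu> * L)"
    proof -
      have "\<mu> * L * \<delta> = (\<gamma> * \<mu> * L) - ((\<gamma> * \<mu> * L) + \<mu> * L * (\<mu> * L + (\<gamma> * \<mu> * L))) * b"
        unfolding \<delta>_def by (simp add: algebra_simps)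
      then show ?thesis unfolding gmuL by (simp add: algebra_simps)
    qed
    then have "\<mu> * L * \<delta> > 0" using k by simp
    then show ?thesis using muL by (simp add: zero_less_mult_iff)
  qed
  have R_ge: "R \<ge> A 0" "R \<ge> B 0 / \<gamma>" "R \<ge> \<mu> * D * b / \<delta>"
    unfolding R_def b_def \<delta>_def by auto
  have A_nn: "A k \<ge> 0" for k unfolding A_def using sn_pos by simp
  have B_nn: "B k \<ge> 0" for k unfolding B_def by simp
  have stepA: "A (Suc k) \<le> s * A k + \<mu> * L * B k" for k
  proof -
    define xk where "xk = x k"
    define G where "G = (\<chi> i. gf i (xk $ i))"
    define y where "y = xk - \<mu> *\<^sub>R G"
    define xb where "xb = avg xk"
    define p where "p = proj xb"
    have xs: "x (Suc k) = kron_apply (matpow W (t k)) y"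
      using iter unfolding near_dgd_plus_def y_def G_def xk_def by blast
    have pX: "p \<in> Xs" unfolding p_def by (rule proj_in)
    have Ak: "A k = sqrt n * norm (xb - p)" unfolding A_def xb_def p_def xk_def ..
    have Bk: "B k = norm (xk - (\<chi> i. xb))" unfolding B_def xb_def xk_def ..
    have avgG: "avg G = (1 / n) *\<^sub>R (\<Sum>i\<in>UNIV. gf i (xk $ i))"
      unfolding avg_def G_def n_def by simp
    have xb': "avg (x (Suc k)) = xb - \<mu> *\<^sub>R avg G"
      unfolding xs avg_kron_matpow[OF W_ds] y_def xb_def by (simp add: avg_diff avg_scaleR)
    have contr: "(norm (xb - p - \<mu> *\<^sub>R Gf xb))\<^sup>2 \<le> (1 - 2 * Lg * \<alpha> * cH / (Lg + \<alpha>) * \<mu>) * (norm (xb - p))\<^sup>2"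
      by (rule contraction[OF g_sc(2) g_smooth g_sc(1) aL G1 Gp[OF pX] NH_bd NH_pos _ hoffman(1)])
         (use hoffman(2)[of xb] mu_pos mu_bd1 CH_eq in \<open>auto simp: p_def matrix_vector_mult_diff_distrib\<close>)
    have c1: "norm (xb - p - \<mu> *\<^sub>R Gf xb) \<le> s * norm (xb - p)"
    proof (rule power2_le_imp_le)
      show "(norm (xb - p - \<mu> *\<^sub>R Gf xb))\<^sup>2 \<le> (s * norm (xb - p))\<^sup>2"
        using contr unfolding power_mult_distrib s_sq C2_def .
      show "0 \<le> s * norm (xb - p)" using s_nn by simp
    qed
    have sumB: "(\<Sum>i\<in>UNIV. norm (xk $ i - xb)) \<le> sqrt n * B k"
    proof -
      define a :: "real^'n" where "a = (\<chi> i. norm (xk $ i - xb))"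
      have "(\<Sum>i\<in>UNIV. norm (xk $ i - xb)) = onev \<bullet> a" unfolding onev_def a_def inner_vec_def by simp
      also have "\<dots> \<le> norm (onev :: real^'n) * norm a" by (rule norm_cauchy_schwarz)
      also have "norm (onev :: real^'n) = sqrt n"
      proof -
        have "(norm (onev :: real^'n))\<^sup>2 = n" unfolding power2_norm_eq_inner onev_def inner_vec_def n_def by simp
        then show ?thesis by (metis abs_norm_cancel real_sqrt_abs)
      qed
      also have "norm a = B k"
      proof -
        have e1: "(norm a)\<^sup>2 = (\<Sum>i\<in>UNIV. (norm (xk $ i - xb))\<^sup>2)"
          unfolding power2_norm_eq_inner[of a] unfolding a_def inner_vec_def by (simp add: power2_eq_square)
        have e2: "(B k)\<^sup>2 = (\<Sum>i\<in>UNIV. (norm (xk $ i - xb))\<^sup>2)"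
          unfolding Bk norm_sq_rows[of "xk - _"] by simp
        have "(norm a)\<^sup>2 = (B k)\<^sup>2" using e1 e2 by simp
        then show ?thesis using B_nn[of k] by (metis abs_norm_cancel abs_of_nonneg power2_eq_iff_nonneg norm_ge_zero)
      qed
      finally show ?thesis .
    qed
    have c2: "norm (Gf xb - avg G) \<le> L / sqrt n * B k"
    proof -
      have "Gf xb - avg G = (1 / n) *\<^sub>R (\<Sum>i\<in>UNIV. gf i xb - gf i (xk $ i))"
        unfolding Gf_def avgG by (simp add: sum_subtractf scaleR_diff_right)
      then have "norm (Gf xb - avg G) = (1 / n) * norm (\<Sum>i\<in>UNIV. gf i xb - gf i (xk $ i))"
        using n_pos by simp
      also have "\<dots> \<le> (1 / n) * (\<Sum>i\<in>UNIV. L * norm (xk $ i - xb))"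
      proof -
        have "norm (\<Sum>i\<in>UNIV. gf i xb - gf i (xk $ i)) \<le> (\<Sum>i\<in>UNIV. norm (gf i xb - gf i (xk $ i)))"
          by (rule norm_sum)
        also have "\<dots> \<le> (\<Sum>i\<in>UNIV. L * norm (xk $ i - xb))"
          by (rule sum_mono) (metis gf_lip norm_minus_commute)
        finally show ?thesis using n_pos by (simp add: divide_right_mono)
      qed
      also have "\<dots> = L / n * (\<Sum>i\<in>UNIV. norm (xk $ i - xb))" by (simp add: sum_distrib_left)
      also have "\<dots> \<le> L / n * (sqrt n * B k)" using sumB L_pos n_pos by (intro mult_left_mono) auto
      also have "\<dots> = L / sqrt n * B k"
      proof -
        have nn: "sqrt n * sqrt n = n" using n_pos by simp
        show ?thesis using sn_pos n_pos by (simp add: field_simps nn)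
      qed
      finally show ?thesis .
    qed
    have eqd: "xb - \<mu> *\<^sub>R avg G - p = (xb - p - \<mu> *\<^sub>R Gf xb) + \<mu> *\<^sub>R (Gf xb - avg G)"
      by (simp add: algebra_simps)
    have "norm (xb - \<mu> *\<^sub>R avg G - p) \<le> norm (xb - p - \<mu> *\<^sub>R Gf xb) + norm (\<mu> *\<^sub>R (Gf xb - avg G))"
      unfolding eqd by (rule norm_triangle_ineq)
    also have "\<dots> = norm (xb - p - \<mu> *\<^sub>R Gf xb) + \<mu> * norm (Gf xb - avg G)" using mu_pos by simp
    also have "\<dots> \<le> s * norm (xb - p) + \<mu> * (L / sqrt n * B k)"
      using c1 c2 mu_pos by (intro add_mono mult_left_mono) auto
    finally have "norm (xb - \<mu> *\<^sub>R avg G - p) \<le> s * norm (xb - p) + \<mu> * (L / sqrt n * B k)" .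
    moreover have "A (Suc k) \<le> sqrt n * norm (xb - \<mu> *\<^sub>R avg G - p)"
      unfolding A_def xb'[symmetric] using proj_le[OF pX, of "avg (x (Suc k))"] sn_pos by simp
    moreover have "sqrt n * norm (xb - \<mu> *\<^sub>R avg G - p) \<le> sqrt n * (s * norm (xb - p) + \<mu> * (L / sqrt n * B k))"
      using sn_pos calculation by (intro mult_left_mono) auto
    ultimately have "A (Suc k) \<le> sqrt n * (s * norm (xb - p) + \<mu> * (L / sqrt n * B k))"
      by linarith
    also have "\<dots> = s * A k + \<mu> * L * B k" unfolding Ak using sn_pos by (simp add: field_simps)
    finally show ?thesis .
  qed
  have stepB: "B (Suc k) \<le> b * (B k + \<mu> * (L * (B k + A k) + D))" for k
  proof -
    define xk where "xk = x k"
    define G where "G = (\<chi> i. gf i (xk $ i))"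
    define y where "y = xk - \<mu> *\<^sub>R G"
    define xb where "xb = avg xk"
    define p where "p = proj xb"
    have xs: "x (Suc k) = kron_apply (matpow W (t k)) y"
      using iter unfolding near_dgd_plus_def y_def G_def xk_def by blast
    have pX: "p \<in> Xs" unfolding p_def by (rule proj_in)
    have Ak: "A k = sqrt n * norm (xb - p)" unfolding A_def xb_def p_def xk_def ..
    have Bk: "B k = norm (xk - (\<chi> i. xb))" unfolding B_def xb_def xk_def ..
    have "B (Suc k) \<le> \<beta> ^ t k * norm (y - (\<chi> i. avg y))"
      unfolding B_def xs \<beta>_def by (rule consensus[OF W_ds])
    moreover have "y - (\<chi> i. avg y) = (xk - (\<chi> i. xb)) - \<mu> *\<^sub>R (G - (\<chi> i. avg G))"
    proof -
      have ay: "avg y = xb - \<mu> *\<^sub>R avg G" unfolding y_def xb_def by (simp add: avg_diff avg_scaleR)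
      have yi: "\<And>i. y $ i = xk $ i - \<mu> *\<^sub>R G $ i" unfolding y_def by simp
      show ?thesis unfolding vec_eq_iff by (simp add: yi ay algebra_simps)
    qed
    ultimately have b1: "B (Suc k) \<le> \<beta> ^ t k * (B k + \<mu> * norm G)"
    proof -
      assume h1: "B (Suc k) \<le> \<beta> ^ t k * norm (y - (\<chi> i. avg y))"
      assume h2: "y - (\<chi> i. avg y) = (xk - (\<chi> i. xb)) - \<mu> *\<^sub>R (G - (\<chi> i. avg G))"
      have "norm (y - (\<chi> i. avg y)) \<le> B k + \<mu> * norm (G - (\<chi> i. avg G))"
        unfolding h2 Bk using norm_triangle_ineq4[of "xk - (\<chi> i. xb)" "\<mu> *\<^sub>R (G - (\<chi> i. avg G))"] mu_pos by simp
      also have "\<dots> \<le> B k + \<mu> * norm G" using stack_dev_le[of G] mu_pos by simp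
      finally have "norm (y - (\<chi> i. avg y)) \<le> B k + \<mu> * norm G" .
      then have "\<beta> ^ t k * norm (y - (\<chi> i. avg y)) \<le> \<beta> ^ t k * (B k + \<mu> * norm G)"
        using beta_nn by (intro mult_left_mono) auto
      then show ?thesis using h1 by linarith
    qed
    define Gs where "Gs = (\<chi> i. gf i p)"
    have nGs: "norm Gs \<le> D"
    proof -
      have sq: "(norm Gs)\<^sup>2 = (\<Sum>j\<in>UNIV. (norm (gf j p))\<^sup>2)"
        unfolding Gs_def norm_sq_rows by simp
      have "norm Gs = sqrt (\<Sum>j\<in>UNIV. (norm (gf j p))\<^sup>2)"
        by (rule real_sqrt_unique[symmetric]) (use sq in auto)
      also have "\<dots> \<le> D" unfolding D_def by (rule cSUP_upper[OF pX D_fin])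
      finally show ?thesis .
    qed
    have nGG: "norm (G - Gs) \<le> L * norm (xk - (\<chi> i. p))"
    proof -
      have "(norm (G - Gs))\<^sup>2 = (\<Sum>i\<in>UNIV. (norm (gf i (xk $ i) - gf i p))\<^sup>2)"
      proof -
        have "G - Gs = (\<chi> i. gf i (xk $ i) - gf i p)" by (simp add: vec_eq_iff G_def Gs_def)
        then show ?thesis by (simp only: norm_sq_rows) simp
      qed
      also have "\<dots> \<le> (\<Sum>i\<in>UNIV. (L * norm (xk $ i - p))\<^sup>2)"
        by (intro sum_mono power_mono gf_lip) auto
      also have "\<dots> = (L * norm (xk - (\<chi> i. p)))\<^sup>2"
        unfolding power_mult_distrib norm_sq_rows[of "xk - _"] by (simp add: sum_distrib_left)
      finally have "(norm (G - Gs))\<^sup>2 \<le> (L * norm (xk - (\<chi> i. p)))\<^sup>2" .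
      then show ?thesis by (rule power2_le_imp_le) (use L_pos in auto)
    qed
    have nxp: "norm (xk - (\<chi> i. p)) \<le> B k + A k"
    proof -
      have "xk - (\<chi> i. p) = (xk - (\<chi> i. xb)) + (\<chi> i. xb - p)" unfolding vec_eq_iff by simp
      then have "norm (xk - (\<chi> i. p)) \<le> norm (xk - (\<chi> i. xb)) + norm ((\<chi> i. xb - p) :: real^'p^'n)"
        by (simp only:) (rule norm_triangle_ineq)
      also have "norm ((\<chi> i. xb - p) :: real^'p^'n) = A k" unfolding Ak norm_stack n_def ..
      finally show ?thesis unfolding Bk .
    qed
    have nG: "norm G \<le> L * (B k + A k) + D"
    proof -
      have "norm G \<le> norm (G - Gs) + norm Gs" using norm_triangle_ineq[of "G - Gs" Gs] by simp
      also have "\<dots> \<le> L * (B k + A k) + D"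
      proof -
        have "L * norm (xk - (\<chi> i. p)) \<le> L * (B k + A k)" using nxp L_pos by (intro mult_left_mono) auto
        then show ?thesis using nGG nGs by linarith
      qed
      finally show ?thesis .
    qed
    have "B (Suc k) \<le> \<beta> ^ t k * (B k + \<mu> * (L * (B k + A k) + D))"
    proof -
      have "\<mu> * norm G \<le> \<mu> * (L * (B k + A k) + D)" using nG mu_pos by (intro mult_left_mono) auto
      then have "\<beta> ^ t k * (B k + \<mu> * norm G) \<le> \<beta> ^ t k * (B k + \<mu> * (L * (B k + A k) + D))"
        using beta_nn by (intro mult_left_mono) auto
      then show ?thesis using b1 by linarith
    qed
    also have "\<dots> \<le> b * (B k + \<mu> * (L * (B k + A k) + D))"
    proof (rule mult_right_mono[OF bt])
      show "0 \<le> B k + \<mu> * (L * (B k + A k) + D)"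
      proof -
        have "0 \<le> D" using nGs norm_ge_zero[of Gs] by linarith
        then show ?thesis using B_nn[of k] A_nn[of k] mu_pos L_pos by simp
      qed
    qed
    finally show ?thesis .
  qed
  have "A k \<le> R \<and> B k \<le> \<gamma> * R" for k
  proof (induction k)
    case 0
    have "B 0 \<le> \<gamma> * R" using R_ge(2) g_pos by (simp add: divide_le_eq mult.commute)
    then show ?case using R_ge(1) by simp
  next
    case (Suc k)
    have R_nn: "R \<ge> 0" using R_ge(1) A_nn[of 0] by simp
    have "A (Suc k) \<le> s * A k + \<mu> * L * B k" by (rule stepA)
    also have "\<dots> \<le> s * R + \<mu> * L * (\<gamma> * R)"
      using Suc s_nn mu_pos L_pos by (intro add_mono mult_left_mono) auto
    also have "\<dots> = (s + \<gamma> * \<mu> * L) * R" by (simp add: algebra_simps)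
    also have "\<dots> = R" unfolding gmuL by simp
    finally have a: "A (Suc k) \<le> R" .
    have "B (Suc k) \<le> b * (B k + \<mu> * (L * (B k + A k) + D))" by (rule stepB)
    also have "\<dots> \<le> b * (\<gamma> * R + \<mu> * (L * (\<gamma> * R + R) + D))"
      using Suc b_nn mu_pos L_pos by (intro mult_left_mono add_mono) auto
    also have "\<dots> = (\<gamma> + (1 + \<gamma>) * \<mu> * L) * b * R + \<mu> * D * b" by (simp add: algebra_simps)
    also have "\<dots> \<le> \<gamma> * R"
    proof -
      have "\<mu> * D * b \<le> \<delta> * R" using R_ge(3) delta_pos by (simp add: divide_le_eq mult.commute)
      then show ?thesis unfolding \<delta>_def by (simp add: algebra_simps)
    qed
    finally show ?case using a by simp
  qed
  then show ?thesis by blast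
qed

end
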